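(* Let $n,m$ be positive integers, $S\subseteq S_n$ a subset containing the identity, and $G\le S_n$ the subgroup generated by $S$. If the player can win the $(S,m)$-game, then $|G|=1$, or $m=1$, or $(|G|,m)=(p^a,p^b)$ for some prime $p$ and positive integers $a,b$. Equivalently, if there are distinct primes $p,q$ with $p\mid |G|$ and $q\mid m$, the player cannot win.
   Context: The $(S,m)$-game: $n$ counters at positions $1,\dots,n$, each showing an element of $\mathbb{Z}_m$, so a configuration is a vector in $\mathbb{Z}_m^n$, initially arbitrary and unknown. Each turn the player chooses a move $y\in\mathbb{Z}_m^n$, added coordinatewise; then an adversarially chosen permutation $\sigma\in S$ (possibly different each turn) is applied, replacing $x$ by $x'$ with $x'_{\sigma(i)}=x_i$. The player wins if at some moment (including initially) all counters show $0$. A strategy is a finite sequence of moves; it is winning if it forces the zero configuration at some time for every initial configuration and every choice of permutations. "The player can win" means a winning finite sequence exists. *)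

theory Defs
  imports "HOL-Algebra.Sym_Groups" "HOL-Computational_Algebra.Primes"
begin

text \<open>A configuration is a
function nat => int, read modulo m (only positions 1..n matter).
A move y is added coordinatewise, then a permutation sigma (of {1..n}) is
applied: the new configuration x' satisfies x'(sigma i) = x i + y i,
i.e. x' = (x + y) composed with inv sigma.\<close>

definition game_turn :: "(nat \<Rightarrow> int) \<Rightarrow> (nat \<Rightarrow> nat) \<Rightarrow> (nat \<Rightarrow> int) \<Rightarrow> (nat \<Rightarrow> int)"
  where "game_turn y \<sigma> x = (\<lambda>i. x (inv_into UNIV \<sigma> i) + y (inv_into UNIV \<sigma> i))"

fun game_state :: "(nat \<Rightarrow> int) \<Rightarrow> (nat \<Rightarrow> int) list \<Rightarrow> (nat \<Rightarrow> nat \<Rightarrow> nat) \<Rightarrow> nat \<Rightarrow> (nat \<Rightarrow> int)"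
  where
    "game_state x ys \<sigma>s 0 = x"
  | "game_state x ys \<sigma>s (Suc t) = game_turn (ys ! t) (\<sigma>s t) (game_state x ys \<sigma>s t)"

definition all_zero :: "nat \<Rightarrow> nat \<Rightarrow> (nat \<Rightarrow> int) \<Rightarrow> bool"
  where "all_zero n m x \<longleftrightarrow> (\<forall>i\<in>{1..n}. x i mod int m = 0)"

text \<open>A finite sequence of moves ys is winning if for every initial
configuration and every choice of permutations from S, the zero
configuration appears at some time 0..length ys. (The adversary's
choices may depend on anything, in particular on the whole strategy and
the initial configuration; quantifying over all sequences covers this.)\<close>
definition winning_strategy :: "nat \<Rightarrow> nat \<Rightarrow> (nat \<Rightarrow> nat) set \<Rightarrow> (nat \<Rightarrow> int) list \<Rightarrow> bool"
  where "winning_strategy n m S ys \<longleftrightarrow>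
    (\<forall>x \<sigma>s. (\<forall>t. \<sigma>s t \<in> S) \<longrightarrow> (\<exists>t\<le>length ys. all_zero n m (game_state x ys \<sigma>s t)))"

definition player_can_win :: "nat \<Rightarrow> nat \<Rightarrow> (nat \<Rightarrow> nat) set \<Rightarrow> bool"
  where "player_can_win n m S \<longleftrightarrow> (\<exists>ys. winning_strategy n m S ys)"

end

theory Submission
  imports Defs "HOL-Algebra.Sylow" "HOL-Algebra.Multiplicative_Group"
begin

definition inW :: "(nat\<Rightarrow>nat) set \<Rightarrow> int \<Rightarrow> (nat\<Rightarrow>nat) \<Rightarrow> nat \<Rightarrow> (nat\<Rightarrow>int) \<Rightarrow> bool" where
  "inW G q g j x \<longleftrightarrow> (\<forall>\<tau>\<in>G. q dvd x (\<tau> (g j)) - x (\<tau> j))"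

lemma inW_add: "inW G q g j a \<Longrightarrow> inW G q g j b \<Longrightarrow> inW G q g j (\<lambda>i. a i + b i)"
  unfolding inW_def
proof safe
  fix \<tau> assume "\<forall>\<tau>\<in>G. q dvd a (\<tau> (g j)) - a (\<tau> j)" "\<forall>\<tau>\<in>G. q dvd b (\<tau> (g j)) - b (\<tau> j)" "\<tau> \<in> G"
  then have "q dvd (a (\<tau> (g j)) - a (\<tau> j)) + (b (\<tau> (g j)) - b (\<tau> j))" by auto
  then show "q dvd a (\<tau> (g j)) + b (\<tau> (g j)) - (a (\<tau> j) + b (\<tau> j))" by (simp add: algebra_simps)
qed

lemma inW_neg: "inW G q g j a \<Longrightarrow> inW G q g j (\<lambda>i. - a i)"
  unfolding inW_def by (auto simp: dvd_diff_commute)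

lemma inW_comp: "inW G q g j a \<Longrightarrow> (\<And>\<tau>. \<tau> \<in> G \<Longrightarrow> \<rho> \<circ> \<tau> \<in> G) \<Longrightarrow> inW G q g j (\<lambda>i. a (\<rho> i))"
  unfolding inW_def by (metis comp_apply)

lemma game_state_cong:
  "(\<forall>i<t. \<sigma>s i = \<sigma>s' i) \<Longrightarrow> game_state x ys \<sigma>s t = game_state x ys \<sigma>s' t"
  by (induction t) auto

lemma key_lemma:
  fixes q :: int
  assumes S: "S \<subseteq> carrier (sym_group n)"
    and G: "G = generate (sym_group n) S"
    and gG: "g \<in> G" and gp: "g ^^ p = id"
    and qp: "\<not> q dvd int p" and qprime: "prime q"
    and nz: "\<not> inW G q g j z"
  shows "\<exists>\<sigma>\<in>S. \<not> inW G q g j (\<lambda>i. z (\<sigma> i) - z i)"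
proof (rule ccontr)
  assume "\<not> ?thesis"
  then have hS: "\<forall>\<sigma>\<in>S. inW G q g j (\<lambda>i. z (\<sigma> i) - z i)" by auto
  have mult: "a \<circ> b \<in> G" if "a \<in> G" "b \<in> G" for a b
    using generate.eng[of a "sym_group n" S b] that G by (simp add: sym_group_def)
  have idG: "id \<in> G" using generate.one[of "sym_group n" S] G by (simp add: sym_group_def)
  have all: "inW G q g j (\<lambda>i. z (\<sigma> i) - z i)" if "\<sigma> \<in> G" for \<sigma>
    using that[unfolded G]
  proof (induction \<sigma> rule: generate.induct)
    case one
    then show ?case by (simp add: sym_group_def inW_def)
  next
    case (incl h)
    then show ?case using hS by auto
  next
    case (inv h)
    have hc: "h permutes {1..n}" using inv S by (auto simp: sym_group_carrier)
    have iv: "inv\<^bsub>sym_group n\<^esub> h = inv_into UNIV h" using inv S by auto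
    have ivG: "inv_into UNIV h \<in> G" using generate.inv[of h S "sym_group n", OF inv] iv G by simp
    have "inW G q g j (\<lambda>i. z (h (inv_into UNIV h i)) - z (inv_into UNIV h i))"
      using inW_comp[OF hS[rule_format, OF inv]] mult ivG by blast
    then have "inW G q g j (\<lambda>i. z i - z (inv_into UNIV h i))"
      using permutes_inverses(1)[OF hc] by simp
    from inW_neg[OF this] show ?case using iv by simp
  next
    case (eng h1 h2)
    have h2G: "h2 \<in> G" using eng G by simp
    have a: "inW G q g j (\<lambda>i. z (h1 (h2 i)) - z (h2 i))"
      using inW_comp[OF eng(3)] mult h2G by blast
    have "inW G q g j (\<lambda>i. (z (h1 (h2 i)) - z (h2 i)) + (z (h2 i) - z i))"
      by (rule inW_add[OF a eng(4)])
    then show ?case by (simp add: sym_group_def)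
  qed
  from nz obtain \<tau> where tG: "\<tau> \<in> G" and ndv: "\<not> q dvd z (\<tau> (g j)) - z (\<tau> j)"
    unfolding inW_def by auto
  define c where "c k = z (\<tau> ((g ^^ k) j))" for k
  define D where "D = z (g j) - z j"
  have powG: "g ^^ k \<in> G" for k
  proof (induction k)
    case 0 then show ?case using idG by (simp add: id_def)
  next
    case (Suc k) then show ?case using mult[OF gG Suc] by (simp add: comp_def)
  qed
  have step: "q dvd (c (Suc k) - c k) - D" for k
  proof -
    have "inW G q g j (\<lambda>i. z ((\<tau> \<circ> g ^^ k) i) - z i)"
      using all mult[OF tG powG] by blast
    then have "q dvd (z (\<tau> ((g ^^ k) (g j))) - z (g j)) - (z (\<tau> ((g ^^ k) j)) - z j)"
      unfolding inW_def using idG by fastforce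
    moreover have "(g ^^ k) (g j) = (g ^^ Suc k) j" by (simp add: funpow_Suc_right del: funpow.simps)
    ultimately show ?thesis by (simp add: c_def D_def algebra_simps)
  qed
  have "q dvd (\<Sum>k<p. (c (Suc k) - c k) - D)"
    by (rule dvd_sum) (use step in auto)
  moreover have "(\<Sum>k<p. (c (Suc k) - c k) - D) = (c p - c 0) - int p * D"
    using sum_lessThan_telescope[of c p] by (simp add: sum_subtractf del: sum_lessThan_telescope)
  moreover have "c p = c 0" by (simp add: c_def gp)
  ultimately have "q dvd int p * D" by simp
  with qp qprime have "q dvd D" using prime_dvd_mult_iff by blast
  with step[of 0] have "q dvd (c (Suc 0) - c 0 - D) + D"
    by (rule dvd_add)
  then have "q dvd c 1 - c 0" by simp
  then show False using ndv by (simp add: c_def)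
qed



lemma step_lemma:
  fixes q :: int
  assumes S: "S \<subseteq> carrier (sym_group n)" and idS: "id \<in> S"
    and G: "G = generate (sym_group n) S"
    and gG: "g \<in> G" and gp: "g ^^ p = id"
    and qp: "\<not> q dvd int p" and qprime: "prime q"
    and nz: "\<not> inW G q g j z"
  shows "\<exists>\<sigma>\<in>S. \<exists>x. \<not> inW G q g j x \<and> game_turn y \<sigma> x = z"
proof -
  have gt: "game_turn y \<sigma> (\<lambda>i. z (\<sigma> i) - y i) = z" if "\<sigma> \<in> S" for \<sigma>
  proof -
    have "\<sigma> permutes {1..n}" using that S by (auto simp: sym_group_carrier)
    then have "surj \<sigma>" by (rule permutes_surj)
    then show ?thesis unfolding game_turn_def by (simp add: surj_f_inv_f)
  qed
  show ?thesis
  proof (cases "inW G q g j (\<lambda>i. z i - y i)")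
    case False
    then show ?thesis using gt[OF idS] idS by (intro bexI[of _ id]) auto
  next
    case True
    obtain \<sigma> where sS: "\<sigma> \<in> S" and ns: "\<not> inW G q g j (\<lambda>i. z (\<sigma> i) - z i)"
      using key_lemma[OF S G gG gp qp qprime nz] by blast
    have "\<not> inW G q g j (\<lambda>i. z (\<sigma> i) - y i)"
    proof
      assume a: "inW G q g j (\<lambda>i. z (\<sigma> i) - y i)"
      have "inW G q g j (\<lambda>i. (z (\<sigma> i) - y i) + - (z i - y i))"
        by (rule inW_add[OF a inW_neg[OF True]])
      then show False using ns by simp
    qed
    then show ?thesis using gt[OF sS] sS by blast
  qed
qed

lemma backward_lemma:
  fixes q :: int
  assumes S: "S \<subseteq> carrier (sym_group n)" and idS: "id \<in> S"
    and G: "G = generate (sym_group n) S"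
    and gG: "g \<in> G" and gp: "g ^^ p = id"
    and qp: "\<not> q dvd int p" and qprime: "prime q"
  shows "\<forall>z. \<not> inW G q g j z \<longrightarrow> (\<exists>x \<sigma>s. (\<forall>t. \<sigma>s t \<in> S) \<and>
           (\<forall>t\<le>k. \<not> inW G q g j (game_state x ys \<sigma>s t)) \<and> game_state x ys \<sigma>s k = z)"
proof (induction k)
  case 0
  show ?case
  proof safe
    fix z assume "\<not> inW G q g j z"
    then show "\<exists>x \<sigma>s. (\<forall>t. \<sigma>s t \<in> S) \<and> (\<forall>t\<le>0. \<not> inW G q g j (game_state x ys \<sigma>s t)) \<and> game_state x ys \<sigma>s 0 = z"
      using idS by (intro exI[of _ z] exI[of _ "\<lambda>_. id"]) auto
  qed
next
  case (Suc k)
  show ?case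
  proof safe
    fix z assume nz: "\<not> inW G q g j z"
    obtain \<sigma> x' where sS: "\<sigma> \<in> S" and nx': "\<not> inW G q g j x'" and gt: "game_turn (ys ! k) \<sigma> x' = z"
      using step_lemma[OF S idS G gG gp qp qprime nz] by blast
    obtain x \<sigma>s where s1: "\<forall>t. \<sigma>s t \<in> S" and s2: "\<forall>t\<le>k. \<not> inW G q g j (game_state x ys \<sigma>s t)"
      and s3: "game_state x ys \<sigma>s k = x'"
      using Suc.IH nx' by blast
    define \<sigma>s' where "\<sigma>s' = \<sigma>s(k := \<sigma>)"
    have eq: "game_state x ys \<sigma>s' t = game_state x ys \<sigma>s t" if "t \<le> k" for t
      by (rule game_state_cong) (use that in \<open>auto simp: \<sigma>s'_def\<close>)
    have last: "game_state x ys \<sigma>s' (Suc k) = z"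
      using eq[of k] s3 gt by (simp add: \<sigma>s'_def)
    show "\<exists>x \<sigma>s. (\<forall>t. \<sigma>s t \<in> S) \<and> (\<forall>t\<le>Suc k. \<not> inW G q g j (game_state x ys \<sigma>s t)) \<and> game_state x ys \<sigma>s (Suc k) = z"
    proof (intro exI[of _ x] exI[of _ \<sigma>s'] conjI allI impI)
      show "\<sigma>s' t \<in> S" for t using s1 sS by (simp add: \<sigma>s'_def)
    next
      fix t assume "t \<le> Suc k"
      then consider "t \<le> k" | "t = Suc k" by linarith
      then show "\<not> inW G q g j (game_state x ys \<sigma>s' t)"
        by cases (use eq s2 last nz in auto)
    qed (rule last)
  qed
qed

lemma nt_lemma:
  fixes N m :: nat
  assumes "N > 0" "m > 0" "N \<noteq> 1" "m \<noteq> 1"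
    and no: "\<not> (\<exists>p a b. prime p \<and> a > 0 \<and> b > 0 \<and> N = p ^ a \<and> m = p ^ b)"
  shows "\<exists>p q. prime p \<and> prime q \<and> p \<noteq> q \<and> p dvd N \<and> q dvd m"
proof -
  obtain q where q: "prime q" "q dvd m" using prime_factor_nat assms(4) by blast
  obtain k r where kr: "\<not> q dvd r" "N = r * q ^ k" using prime_power_canonical[OF q(1) assms(1)] by blast
  show ?thesis
  proof (cases "r = 1")
    case False
    obtain p where p: "prime p" "p dvd r" using prime_factor_nat False by blast
    have "p \<noteq> q" using p kr by auto
    then show ?thesis using p q kr by (intro exI[of _ p] exI[of _ q]) auto
  next
    case True
    then have Nq: "N = q ^ k" using kr by simp
    then have k0: "k > 0" using assms(3) by (cases k) auto
    obtain l s where ls: "\<not> q dvd s" "m = s * q ^ l" using prime_power_canonical[OF q(1) assms(2)] by blast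
    show ?thesis
    proof (cases "s = 1")
      case False
      obtain p' where p: "prime p'" "p' dvd s" using prime_factor_nat False by blast
      have "p' \<noteq> q" using p ls by auto
      moreover have "q dvd N" using Nq k0 by (simp add: dvd_power)
      ultimately show ?thesis using p q ls by (intro exI[of _ q] exI[of _ p']) auto
    next
      case True
      then have "m = q ^ l" using ls by simp
      moreover have "l > 0" using \<open>m = q ^ l\<close> assms(4) by (cases l) auto
      ultimately show ?thesis using no Nq k0 q by blast
    qed
  qed
qed


lemma cauchy_perm:
  assumes S: "S \<subseteq> carrier (sym_group n)" and p: "prime p"
    and dv: "p dvd card (generate (sym_group n) S)"
  shows "\<exists>g\<in>generate (sym_group n) S. g \<noteq> id \<and> g ^^ p = id"
proof -
  define G where "G = generate (sym_group n) S"
  interpret sym: group "sym_group n" by (rule sym_group_is_group)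
  have sub: "subgroup G (sym_group n)" unfolding G_def by (rule sym.generate_is_subgroup[OF S])
  define Gs where "Gs = (sym_group n)\<lparr>carrier := G\<rparr>"
  have grp: "group Gs" unfolding Gs_def by (rule subgroup.subgroup_is_group[OF sub sym_group_is_group])
  have "finite (carrier (sym_group n))" unfolding sym_group_def by (simp add: finite_permutations)
  then have fin: "finite G" using subgroup.subset[OF sub] finite_subset by blast
  obtain r where r: "card G = p * r" using dv G_def by (auto elim: dvdE)
  have "order Gs = p ^ 1 * r" using r by (simp add: order_def Gs_def)
  then obtain H where H: "subgroup H Gs" "card H = p ^ 1"
    using sylow_thm[OF p grp, of 1 r] fin by (auto simp: Gs_def)
  have "card H \<ge> 2" using H p prime_ge_2_nat by simp
  then obtain h where hH: "h \<in> H" and hid: "h \<noteq> id"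
  proof -
    assume *: "\<And>h. h \<in> H \<Longrightarrow> h \<noteq> id \<Longrightarrow> thesis"
    show thesis
    proof (rule ccontr)
      assume "\<not> thesis"
      then have "H \<subseteq> {id}" using * by blast
      then have "card H \<le> 1" using card_mono[of "{id}" H] by simp
      then show False using \<open>card H \<ge> 2\<close> by simp
    qed
  qed
  define K where "K = Gs\<lparr>carrier := H\<rparr>"
  have grpK: "group K" unfolding K_def by (rule subgroup.subgroup_is_group[OF H(1) grp])
  have hK: "h \<in> carrier K" using hH by (simp add: K_def)
  have pw: "h [^]\<^bsub>K\<^esub> k = h ^^ k" for k :: nat
  proof (induction k)
    case 0 then show ?case by (simp add: K_def Gs_def sym_group_def)
  next
    case (Suc k) then show ?case
      by (simp add: K_def Gs_def sym_group_def funpow_Suc_right del: funpow.simps)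
  qed
  have "h [^]\<^bsub>K\<^esub> order K = \<one>\<^bsub>K\<^esub>" by (rule group.pow_order_eq_1[OF grpK hK])
  moreover have "order K = p" using H by (simp add: order_def K_def)
  ultimately have "h ^^ p = id" using pw by (simp add: K_def Gs_def sym_group_def)
  moreover have "h \<in> G" using subgroup.subset[OF H(1)] hH by (auto simp: Gs_def)
  ultimately show ?thesis using hid G_def by blast
qed


theorem lemma6p2:
  fixes n m :: nat and S :: "(nat \<Rightarrow> nat) set"
  assumes "n > 0" and "m > 0"
    and "S \<subseteq> carrier (sym_group n)"
    and "id \<in> S"
    and "player_can_win n m S"
  shows "card (generate (sym_group n) S) = 1 \<or> m = 1 \<or>
         (\<exists>p a b. prime p \<and> a > 0 \<and> b > 0 \<and>
            card (generate (sym_group n) S) = p ^ a \<and> m = p ^ b)"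
proof (rule ccontr)
  assume neg: "\<not> ?thesis"
  define G where "G = generate (sym_group n) S"
  note S = assms(3) and idS = assms(4)
  interpret sym: group "sym_group n" by (rule sym_group_is_group)
  have sub: "subgroup G (sym_group n)" unfolding G_def by (rule sym.generate_is_subgroup[OF S])
  have "finite (carrier (sym_group n))" unfolding sym_group_def by (simp add: finite_permutations)
  then have fin: "finite G" using subgroup.subset[OF sub] finite_subset by blast
  have idG: "id \<in> G" using generate.one[of "sym_group n" S] by (simp add: G_def sym_group_def)
  have N0: "card G > 0" using fin idG card_gt_0_iff by blast
  obtain p q where pq: "prime p" "prime q" "p \<noteq> q" "p dvd card G" "q dvd m"
    using nt_lemma[OF N0 assms(2)] neg unfolding G_def by blast
  obtain g where gG: "g \<in> G" and gid: "g \<noteq> id" and gp: "g ^^ p = id"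
    using cauchy_perm[OF S pq(1)] pq(4) unfolding G_def by blast
  have perm: "\<tau> permutes {1..n}" if "\<tau> \<in> G" for \<tau>
    using subgroup.subset[OF sub] that by (auto simp: sym_group_carrier)
  obtain j where gj: "g j \<noteq> j" using gid by (metis eq_id_iff)
  have jn: "j \<in> {1..n}" using perm[OF gG] gj by (meson permutes_not_in)
  define qi where "qi = int q"
  have qprime: "prime qi" using pq(2) by (simp add: qi_def)
  have qp: "\<not> qi dvd int p" using pq primes_dvd_imp_eq[of q p] by (auto simp: qi_def)
  define z0 :: "nat \<Rightarrow> int" where "z0 = (\<lambda>i. if i = j then 1 else 0)"
  have nz0: "\<not> inW G qi g j z0"
  proof
    assume "inW G qi g j z0"
    then have "qi dvd z0 (id (g j)) - z0 (id j)" using idG unfolding inW_def by blast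
    then have "qi dvd -1" using gj by (simp add: z0_def)
    then have "qi dvd 1" by (simp only: dvd_minus_iff)
    then show False using qprime not_prime_unit by blast
  qed
  from assms(5) obtain ys where win: "winning_strategy n m S ys" unfolding player_can_win_def by blast
  obtain x \<sigma>s where s1: "\<forall>t. \<sigma>s t \<in> S" and s2: "\<forall>t\<le>length ys. \<not> inW G qi g j (game_state x ys \<sigma>s t)"
    using backward_lemma[OF S idS G_def gG gp qp qprime, of j "length ys" ys] nz0 by blast
  obtain t where t: "t \<le> length ys" and az: "all_zero n m (game_state x ys \<sigma>s t)"
    using win s1 unfolding winning_strategy_def by blast
  have "inW G qi g j (game_state x ys \<sigma>s t)"
    unfolding inW_def
  proof
    fix \<tau> assume tG: "\<tau> \<in> G"
    have "g j \<in> {1..n}" using permutes_in_image[OF perm[OF gG]] jn by blast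
    then have i1: "\<tau> (g j) \<in> {1..n}" and i2: "\<tau> j \<in> {1..n}"
      using permutes_in_image[OF perm[OF tG]] jn by blast+
    have dm: "int m dvd game_state x ys \<sigma>s t i" if "i \<in> {1..n}" for i
      using az that unfolding all_zero_def by (simp add: dvd_eq_mod_eq_0)
    have qm: "qi dvd int m" using pq(5) by (simp add: qi_def)
    show "qi dvd game_state x ys \<sigma>s t (\<tau> (g j)) - game_state x ys \<sigma>s t (\<tau> j)"
      using dvd_trans[OF qm dm[OF i1]] dvd_trans[OF qm dm[OF i2]] by (rule dvd_diff)
  qed
  then show False using s2 t by blast
qed

end
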